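(* Let $\mathbb{T}$ be the $m$-regular tree, and let $L_1$, $L_2$ be the averaging operators on $\mathbb{T}$ with parameters $\beta_1,\beta_2\in[0,1]$ respectively. Let $h_1,h_2:\mathbb{T}\to\mathbb{R}$ and let $f,g:[0,1]\to\mathbb{R}$ be continuous with $f(s)>g(s)$ for all $s\in[0,1]$. Assume that $0\le \beta_1<\tfrac12$, $0\le\beta_2<\tfrac12$, that the series defining $S^{\beta_1}_{h_1}(x)$ and $S^{\beta_2}_{h_2}(x)$ converge for every $x\in\mathbb{T}$, and that for $i=1,2$ $$\lim_{k\to\infty}\ \sup_{x\in\mathbb{T},\,|x|=k}\ \Big|\sum_{j=1}^{k}\Big(\frac{\beta_i}{1-\beta_i}\Big)^{k-j} S^{\beta_i}_{h_i}(x^j)\Big| = 0 .$$ Then there exists a pair of functions $u,v:\mathbb{T}\to\mathbb{R}$ solving the two membranes problem, i.e. $$\max\big\{-L_1(u)(x)+h_1(x),\ v(x)-u(x)\big\}=0,\qquad \min\big\{-L_2(v)(x)+h_2(x),\ u(x)-v(x)\big\}=0\qquad\text{for all }x\in\mathbb{T},$$ with $u|_{\partial\mathbb{T}}=f$ and $v|_{\partial\mathbb{T}}=g$. Moreover, the coincidence set $\{x\in\mathbb{T}: u(x)=v(x)\}$ of this solution is finite.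
   Context: The $m$-regular tree $\mathbb{T}$ ($m\ge 2$): its nodes are the root $\emptyset$ and all finite tuples $x=(a_1,\dots,a_k)$ with $a_i\in\{0,\dots,m-1\}$; $|x|=k$ is the level of $x$ ($|\emptyset|=0$). For $x\neq\emptyset$, $\hat x$ denotes its predecessor (delete the last entry). $S^l(x)$ is the set of the $m^l$ successors of $x$ at level $|x|+l$ (tuples extending $x$ by $l$ entries), $S^0(x)=\{x\}$. For $|x|=k$ and $1\le j\le k$, $x^j$ is the predecessor of $x$ at level $j$ (so $x^k=x$). A branch $z$ is an infinite sequence $(a_1,a_2,\dots)$, equivalently the sequence of nodes $z_n=(a_1,\dots,a_n)$; $\partial\mathbb{T}$ is the set of branches, and $\psi(z)=\sum_{k\ge1}a_k m^{-k}\in[0,1]$. A branch $z$ passes through $x$ if $x=z_{|x|}$. Averaging operator with parameter $\beta\in[0,1]$: for $u:\mathbb{T}\to\mathbb{R}$, $L(u)(x)=u(x)-\beta u(\hat x)-(1-\beta)\frac1m\sum_{y\in S^1(x)}u(y)$ for $x\ne\emptyset$, and $L(u)(\emptyset)=u(\emptyset)-\frac1m\sum_{y\in S^1(\emptyset)}u(y)$. Boundary condition: $u|_{\partial\mathbb{T}}=f$ means the uniform limit: for every $\varepsilon>0$ there is $K$ such that $|u(x)-f(\psi(z))|<\varepsilon$ for every node $x$ with $|x|\ge K$ and every branch $z$ passing through $x$. For $\beta\in[0,1)$ and $h:\mathbb{T}\to\mathbb{R}$, $S^\beta_h(x)=\sum_{i=1}^\infty\sum_{j=0}^{i-1}\frac{\beta^{i-j-1}}{(1-\beta)^{i-j}}\,\frac{1}{m^j}\sum_{y\in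 S^j(x)}h(y)$ (for $\beta>0$ this equals $\frac1\beta\sum_{i\ge1}\sum_{j=0}^{i-1}(\frac{\beta}{1-\beta})^{i-j}m^{-j}\sum_{y\in S^j(x)}h(y)$). The convention $0^0=1$ is used. *)

theory Defs
  imports "HOL-Analysis.Analysis"
begin

text \<open>The m-regular tree: nodes are finite lists over {0..<m}; the list
[a1,...,ak] is the node (a1,...,ak), its length is the level.\<close>

definition tnodes :: "nat \<Rightarrow> nat list set" where
  "tnodes m = {x. set x \<subseteq> {..<m}}"

definition succs :: "nat \<Rightarrow> nat \<Rightarrow> nat list \<Rightarrow> nat list set" where
  "succs m l x = {x @ ys | ys. length ys = l \<and> set ys \<subseteq> {..<m}}"

definition pred_node :: "nat list \<Rightarrow> nat list" where
  "pred_node x = butlast x"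

definition anc :: "nat list \<Rightarrow> nat \<Rightarrow> nat list" where
  "anc x j = take j x"

definition avg_op :: "nat \<Rightarrow> real \<Rightarrow> (nat list \<Rightarrow> real) \<Rightarrow> nat list \<Rightarrow> real" where
  "avg_op m \<beta> u x =
     (if x = [] then u [] - (1 / real m) * (\<Sum>y\<in>succs m 1 []. u y)
      else u x - \<beta> * u (pred_node x) - (1 - \<beta>) * (1 / real m) * (\<Sum>y\<in>succs m 1 x. u y))"

text \<open>Branches: infinite sequences (a1,a2,...) encoded as z with a_k = z (k-1).\<close>
definition branches :: "nat \<Rightarrow> (nat \<Rightarrow> nat) set" where
  "branches m = {z. \<forall>k. z k < m}"

definition psi :: "nat \<Rightarrow> (nat \<Rightarrow> nat) \<Rightarrow> real" where
  "psi m z = (\<Sum>k. real (z k) / real m ^ (Suc k))"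

definition passes :: "(nat \<Rightarrow> nat) \<Rightarrow> nat list \<Rightarrow> bool" where
  "passes z x \<longleftrightarrow> x = map z [0..<length x]"

definition boundary_val :: "nat \<Rightarrow> (nat list \<Rightarrow> real) \<Rightarrow> (real \<Rightarrow> real) \<Rightarrow> bool" where
  "boundary_val m u f \<longleftrightarrow>
     (\<forall>\<epsilon>>0. \<exists>K. \<forall>x\<in>tnodes m. length x \<ge> K \<longrightarrow>
        (\<forall>z\<in>branches m. passes z x \<longrightarrow> \<bar>u x - f (psi m z)\<bar> < \<epsilon>))"

text \<open>The i-th term (i >= 1) of the series defining S^beta_h(x).\<close>
definition S_term :: "nat \<Rightarrow> real \<Rightarrow> (nat list \<Rightarrow> real) \<Rightarrow> nat list \<Rightarrow> nat \<Rightarrow> real" where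
  "S_term m \<beta> h x i =
     (\<Sum>j<i. \<beta> ^ (i - j - 1) / (1 - \<beta>) ^ (i - j) * (1 / real m ^ j) * (\<Sum>y\<in>succs m j x. h y))"

definition S_conv :: "nat \<Rightarrow> real \<Rightarrow> (nat list \<Rightarrow> real) \<Rightarrow> nat list \<Rightarrow> bool" where
  "S_conv m \<beta> h x \<longleftrightarrow> summable (\<lambda>n. S_term m \<beta> h x (Suc n))"

definition S_op :: "nat \<Rightarrow> real \<Rightarrow> (nat list \<Rightarrow> real) \<Rightarrow> nat list \<Rightarrow> real" where
  "S_op m \<beta> h x = (\<Sum>n. S_term m \<beta> h x (Suc n))"

end

theory Submission
  imports Defs
begin

lemma succs_0: "succs m 0 x = {x}" by (auto simp: succs_def)

lemma succs_1: "succs m 1 x = (\<lambda>c. x@[c]) ` {..<m}"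
  by (auto simp: succs_def length_Suc_conv)

lemma succs_1': "succs m (Suc 0) x = (\<lambda>c. x@[c]) ` {..<m}"
  using succs_1 by simp

lemma succs_img: "succs m j x = (\<lambda>ys. x@ys) ` {ys. set ys \<subseteq> {..<m} \<and> length ys = j}"
  by (auto simp: succs_def)

lemma finite_succs: "finite (succs m j x)"
  unfolding succs_img by (intro finite_imageI finite_lists_length_eq) auto

lemma succs_Suc: "succs m (Suc j) x = (\<Union>c\<in>{..<m}. succs m j (x@[c]))"
  by (auto simp: succs_def length_Suc_conv)

lemma sum_succs_Suc: "sum h (succs m (Suc j) x) = (\<Sum>c<m. sum h (succs m j (x@[c])))"
  unfolding succs_Suc
  apply (rule sum.UNION_disjoint)
    apply simp
   apply (simp add: finite_succs)
  apply (auto simp: succs_def)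
  done

lemma sum_succs_1: "sum w (succs m 1 x) = (\<Sum>c<m. w (x@[c]))"
  unfolding succs_1 by (subst sum.reindex) (auto simp: inj_on_def)

lemma tnodes_snoc: "x \<in> tnodes m \<Longrightarrow> c < m \<Longrightarrow> x@[c] \<in> tnodes m"
  by (auto simp: tnodes_def)

lemma tnodes_butlast: "x \<in> tnodes m \<Longrightarrow> butlast x \<in> tnodes m"
  by (auto simp: tnodes_def dest: in_set_butlastD)

lemma tnodes_take: "x \<in> tnodes m \<Longrightarrow> take j x \<in> tnodes m"
  by (auto simp: tnodes_def dest: in_set_takeD)

lemma tnodes_succs1: "x \<in> tnodes m \<Longrightarrow> y \<in> succs m 1 x \<Longrightarrow> y \<in> tnodes m"
  by (auto simp: succs_1 succs_1' tnodes_def)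

lemma finite_level: "finite {x\<in>tnodes m. length x = k}"
proof -
  have "{x\<in>tnodes m. length x = k} = {xs. set xs \<subseteq> {..<m} \<and> length xs = k}"
    by (auto simp: tnodes_def)
  then show ?thesis by (simp add: finite_lists_length_eq)
qed

lemma finite_below: "finite {x\<in>tnodes m. length x < K}"
proof -
  have "{x\<in>tnodes m. length x < K} = (\<Union>k<K. {x\<in>tnodes m. length x = k})" by auto
  then show ?thesis using finite_level by simp
qed


lemma S_term_step:
  assumes "m > 0"
  shows "(1/real m) * (\<Sum>c<m. S_term m \<beta> h (x@[c]) i)
         = S_term m \<beta> h x (Suc i) - \<beta>^i/(1-\<beta>)^(Suc i) * h x"
proof -
  have "S_term m \<beta> h x (Suc i) = \<beta>^i/(1-\<beta>)^(Suc i) * h x +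
     (\<Sum>j<i. \<beta> ^ (i - j - 1) / (1 - \<beta>) ^ (i - j) * (1 / real m ^ Suc j) * (\<Sum>y\<in>succs m (Suc j) x. h y))"
    unfolding S_term_def by (subst sum.lessThan_Suc_shift) (simp add: succs_0)
  moreover have "(1/real m) * (\<Sum>c<m. S_term m \<beta> h (x@[c]) i) =
     (\<Sum>j<i. \<beta> ^ (i - j - 1) / (1 - \<beta>) ^ (i - j) * (1 / real m ^ Suc j) * (\<Sum>y\<in>succs m (Suc j) x. h y))"
  proof -
    have "(1/real m) * (\<Sum>c<m. S_term m \<beta> h (x@[c]) i) =
       (\<Sum>j<i. \<beta> ^ (i - j - 1) / (1 - \<beta>) ^ (i - j) * (1 / real m ^ j) * ((1/real m) * (\<Sum>c<m. \<Sum>y\<in>succs m j (x@[c]). h y)))"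
      unfolding S_term_def sum_distrib_left
      apply (subst sum.swap)
      apply (rule sum.cong, simp)
      apply (simp add: sum_distrib_left mult_ac)
      done
    also have "\<dots> = (\<Sum>j<i. \<beta> ^ (i - j - 1) / (1 - \<beta>) ^ (i - j) * (1 / real m ^ Suc j) * (\<Sum>y\<in>succs m (Suc j) x. h y))"
      by (simp add: sum_succs_Suc mult_ac)
    finally show ?thesis .
  qed
  ultimately show ?thesis by simp
qed

lemma S_op_eq:
  assumes m: "m > 0" and b: "0 \<le> \<beta>" "\<beta> < 1/2"
    and cx: "S_conv m \<beta> h x" and cc: "\<And>c. c < m \<Longrightarrow> S_conv m \<beta> h (x@[c])"
  shows "S_op m \<beta> h x = h x / (1 - 2*\<beta>) + (1/real m) * (\<Sum>c<m. S_op m \<beta> h (x@[c]))"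
proof -
  define r where "r = \<beta>/(1-\<beta>)"
  have r: "0 \<le> r" "r < 1" using b by (auto simp: r_def field_simps)
  have s1: "(\<lambda>n. S_term m \<beta> h x (Suc n)) sums S_op m \<beta> h x"
    using cx unfolding S_conv_def S_op_def by (simp add: summable_sums)
  have s2: "(\<lambda>n. (1/real m) * (\<Sum>c<m. S_term m \<beta> h (x@[c]) (Suc n))) sums
             ((1/real m) * (\<Sum>c<m. S_op m \<beta> h (x@[c])))"
    apply (intro sums_mult sums_sum)
    using cc unfolding S_conv_def S_op_def by (simp add: summable_sums)
  have g: "(\<lambda>n. r^n) sums (1/(1-r))" using r by (intro geometric_sums) simp
  have g2: "(\<lambda>n. \<beta>^n/(1-\<beta>)^(Suc n) * h x) sums (h x / (1 - 2*\<beta>))"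
  proof -
    have "(\<lambda>n. r^n * (h x/(1-\<beta>))) sums (1/(1-r) * (h x/(1-\<beta>)))"
      using sums_mult2[OF g] .
    moreover have "(\<lambda>n. r^n * (h x/(1-\<beta>))) = (\<lambda>n. \<beta>^n/(1-\<beta>)^(Suc n) * h x)"
      by (rule ext) (simp add: r_def power_divide)
    moreover have "1/(1-r) * (h x/(1-\<beta>)) = h x / (1 - 2*\<beta>)"
    proof -
      have "1 - r = (1-2*\<beta>)/(1-\<beta>)" using b by (simp add: r_def field_simps)
      then show ?thesis using b by simp
    qed
    ultimately show ?thesis by metis
  qed
  have "(\<lambda>n. (1/real m) * (\<Sum>c<m. S_term m \<beta> h (x@[c]) n) + \<beta>^n/(1-\<beta>)^(Suc n) * h x) sums
        ((1/real m) * (\<Sum>c<m. S_op m \<beta> h (x@[c])) + h x / (1 - 2*\<beta>))"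
  proof -
    have z: "(\<Sum>c<m. S_term m \<beta> h (x@[c]) 0) = 0"
      by (simp add: S_term_def)
    have "(\<lambda>n. (1/real m) * (\<Sum>c<m. S_term m \<beta> h (x@[c]) n)) sums
             ((1/real m) * (\<Sum>c<m. S_op m \<beta> h (x@[c])))"
      using sums_Suc[OF s2] z by simp
    then show ?thesis using g2 by (rule sums_add)
  qed
  moreover have "\<And>n. (1/real m) * (\<Sum>c<m. S_term m \<beta> h (x@[c]) n) + \<beta>^n/(1-\<beta>)^(Suc n) * h x
        = S_term m \<beta> h x (Suc n)"
    using S_term_step[OF m] by simp
  ultimately have "(\<lambda>n. S_term m \<beta> h x (Suc n)) sums
        ((1/real m) * (\<Sum>c<m. S_op m \<beta> h (x@[c])) + h x / (1 - 2*\<beta>))" by simp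
  with s1 show ?thesis using sums_unique2 by fastforce
qed

lemma alg_W:
  fixes W P Sx A \<beta> r :: real
  assumes b: "\<beta> < 1" and r: "r = \<beta>/(1-\<beta>)" and w: "W = r * P + (1-r) * Sx"
  shows "W - \<beta> * P - (1-\<beta>) * (r * W + (1-r) * A) = (1-\<beta>)*(1-r)*(Sx - A)"
proof -
  have br: "(1-\<beta>) * r = \<beta>" using b r by simp
  have h1: "(1-\<beta>)*(r*W + (1-r)*A) = \<beta>*W + (1-\<beta>)*(1-r)*A"
    by (simp add: distrib_left mult.assoc[symmetric] br)
  have h2: "(1-\<beta>)*W = \<beta>*P + (1-\<beta>)*(1-r)*Sx"
    unfolding w by (simp add: distrib_left mult.assoc[symmetric] br)
  have h3: "(1-\<beta>)*W = W - \<beta>*W" by (simp add: algebra_simps)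
  have h4: "(1-\<beta>)*(1-r)*(Sx - A) = (1-\<beta>)*(1-r)*Sx - (1-\<beta>)*(1-r)*A" by (simp add: algebra_simps)
  show ?thesis unfolding h1 h4 using h2 h3 by linarith
qed

definition Wf :: "real \<Rightarrow> real \<Rightarrow> (nat list \<Rightarrow> real) \<Rightarrow> nat list \<Rightarrow> real" where
  "Wf r a S x = a * r ^ length x + (1-r) * (\<Sum>j=1..length x. r^(length x - j) * S (anc x j))"

lemma Wf_nil: "Wf r a S [] = a" by (simp add: Wf_def)

lemma Wf_snoc: "Wf r a S (x@[c]) = r * Wf r a S x + (1-r) * S (x@[c])"
proof -
  let ?k = "length x"
  have "(\<Sum>j=1..Suc ?k. r^(Suc ?k - j) * S (anc (x@[c]) j)) =
        (\<Sum>j=1..?k. r^(Suc ?k - j) * S (anc (x@[c]) j)) + S (x@[c])"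
    by (simp add: anc_def)
  also have "(\<Sum>j=1..?k. r^(Suc ?k - j) * S (anc (x@[c]) j)) = r * (\<Sum>j=1..?k. r^(?k - j) * S (anc x j))"
    unfolding sum_distrib_left
    by (rule sum.cong) (auto simp: anc_def Suc_diff_le)
  finally show ?thesis by (simp add: Wf_def algebra_simps)
qed

lemma avg_op_nonroot:
  assumes "x \<noteq> []"
  shows "avg_op m \<beta> u x = u x - \<beta> * u (butlast x) - (1 - \<beta>) * (1 / real m) * (\<Sum>c<m. u (x@[c]))"
  using assms unfolding avg_op_def pred_node_def sum_succs_1 by simp

lemma avg_op_root:
  shows "avg_op m \<beta> u [] = u [] - (1 / real m) * (\<Sum>c<m. u [c])"
  unfolding avg_op_def sum_succs_1 by simp

lemma avg_Wf_nonroot: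
  assumes x: "x \<noteq> []" and m: "m > 0" and b: "\<beta> < 1" and r: "r = \<beta>/(1-\<beta>)"
  shows "avg_op m \<beta> (Wf r a S) x = (1-\<beta>)*(1-r)*(S x - (1/real m) * (\<Sum>c<m. S (x@[c])))"
proof -
  have xe: "x = butlast x @ [last x]" using x by simp
  have wx: "Wf r a S x = r * Wf r a S (butlast x) + (1-r) * S x"
    by (subst xe, subst Wf_snoc, subst xe[symmetric], rule refl)
  have cs: "(\<Sum>c<m. Wf r a S (x@[c])) = real m * r * Wf r a S x + (1-r) * (\<Sum>c<m. S (x@[c]))"
    by (simp add: Wf_snoc sum.distrib sum_distrib_left)
  have cs2: "(1/real m) * (real m * r * Wf r a S x + (1-r) * (\<Sum>c<m. S (x@[c])))
      = r * Wf r a S x + (1-r) * ((1/real m) * (\<Sum>c<m. S (x@[c])))"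
    using m by (simp add: field_simps)
  have "avg_op m \<beta> (Wf r a S) x = Wf r a S x - \<beta> * Wf r a S (butlast x)
        - (1-\<beta>) * (r * Wf r a S x + (1-r) * ((1/real m) * (\<Sum>c<m. S (x@[c]))))"
    unfolding avg_op_nonroot[OF x] cs mult.assoc[of "1-\<beta>"] cs2 by simp
  also have "\<dots> = (1-\<beta>)*(1-r)*(S x - (1/real m) * (\<Sum>c<m. S (x@[c])))"
    using alg_W[OF b r wx] .
  finally show ?thesis .
qed

lemma avg_Wf_root:
  assumes m: "m > 0"
  shows "avg_op m \<beta> (Wf r a S) [] = a*(1-r) - (1-r) * ((1/real m) * (\<Sum>c<m. S [c]))"
proof -
  have "(\<Sum>c<m. Wf r a S ([]@[c])) = real m * r * a + (1-r) * (\<Sum>c<m. S ([]@[c]))"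
    by (simp only: Wf_snoc Wf_nil sum.distrib sum_distrib_left) simp
  then show ?thesis using m by (simp add: avg_op_root Wf_nil field_simps)
qed

definition pos :: "nat \<Rightarrow> nat list \<Rightarrow> real" where
  "pos m x = (\<Sum>i<length x. real (x!i) / real m ^ Suc i)"

lemma pos_nil[simp]: "pos m [] = 0" by (simp add: pos_def)

lemma pos_snoc: "pos m (x@[c]) = pos m x + real c / real m ^ Suc (length x)"
  unfolding pos_def by (simp add: nth_append)

lemma pos_bounds:
  assumes "x \<in> tnodes m" "m > 0"
  shows "0 \<le> pos m x \<and> pos m x + 1 / real m ^ length x \<le> 1"
  using assms
proof (induction x rule: rev_induct)
  case Nil then show ?case by simp
next
  case (snoc c x)
  have x: "x \<in> tnodes m" and c: "c < m" using snoc.prems by (auto simp: tnodes_def)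
  have IH: "0 \<le> pos m x" "pos m x + 1 / real m ^ length x \<le> 1" using snoc.IH[OF x snoc.prems(2)] by auto
  have "real c / real m ^ Suc (length x) + 1 / real m ^ Suc (length x) = (real c + 1) / real m ^ Suc (length x)"
    by (simp add: add_divide_distrib)
  also have "\<dots> \<le> real m / real m ^ Suc (length x)"
    using c snoc.prems(2) by (intro divide_right_mono) auto
  also have "\<dots> = 1 / real m ^ length x" using snoc.prems(2) by simp
  finally have "real c / real m ^ Suc (length x) + 1 / real m ^ Suc (length x) \<le> 1 / real m ^ length x" .
  then show ?case using IH by (simp add: pos_snoc)
qed

lemma integral_split_n:
  fixes f :: "real \<Rightarrow> real"
  assumes f: "continuous_on {0..1} f" and p: "0 \<le> p" and d: "0 \<le> d" and pn: "p + real n * d \<le> 1"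
  shows "integral {p..p + real n * d} f = (\<Sum>c<n. integral {p + real c * d .. p + real (Suc c) * d} f)"
  using pn
proof (induction n)
  case 0 then show ?case by simp
next
  case (Suc n)
  have pn: "p + real n * d \<le> 1" using Suc.prems d by (simp add: algebra_simps)
  have "f integrable_on {p..p + real (Suc n) * d}"
    by (rule integrable_continuous_interval, rule continuous_on_subset[OF f]) (use p Suc.prems in auto)
  then have "integral {p..p + real (Suc n) * d} f =
     integral {p..p + real n * d} f + integral {p + real n * d..p + real (Suc n) * d} f"
    by (intro Henstock_Kurzweil_Integration.integral_combine[symmetric]) (use d in \<open>auto simp: algebra_simps\<close>)
  then show ?case using Suc.IH[OF pn] by simp
qed

lemma avg_int_bound:
  fixes f :: "real \<Rightarrow> real"
  assumes f: "continuous_on {0..1} f" and p: "0 \<le> p" and d: "0 < d" and pd: "p + d \<le> 1"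
    and e: "\<And>t. t \<in> {p..p+d} \<Longrightarrow> \<bar>f t - y\<bar> \<le> e"
  shows "\<bar>integral {p..p+d} f / d - y\<bar> \<le> e"
proof -
  have fi: "f integrable_on {p..p+d}"
    by (rule integrable_continuous_interval, rule continuous_on_subset[OF f]) (use p pd in auto)
  have "integral {p..p+d} f \<le> integral {p..p+d} (\<lambda>t. y + e)"
    by (rule integral_le[OF fi]) (use e in \<open>force simp: abs_le_iff\<close>)+
  then have u: "integral {p..p+d} f \<le> d * (y + e)" using d by simp
  have "integral {p..p+d} (\<lambda>t. y - e) \<le> integral {p..p+d} f"
    by (rule integral_le[OF _ fi]) (use e in \<open>force simp: abs_le_iff\<close>)+
  then have l: "d * (y - e) \<le> integral {p..p+d} f" using d by simp
  have "integral {p..p+d} f / d \<le> y + e" using u d by (simp add: divide_le_eq mult.commute)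
  moreover have "y - e \<le> integral {p..p+d} f / d" using l d by (simp add: le_divide_eq mult.commute)
  ultimately show ?thesis by (simp add: abs_le_iff)
qed

definition Fm :: "nat \<Rightarrow> (real \<Rightarrow> real) \<Rightarrow> nat list \<Rightarrow> real" where
  "Fm m f x = integral {pos m x .. pos m x + 1/real m ^ length x} f / (1/real m ^ length x)"

lemma Fm_harm:
  assumes x: "x \<in> tnodes m" and m: "m > 0" and f: "continuous_on {0..1} f"
  shows "Fm m f x = (1/real m) * (\<Sum>c<m. Fm m f (x@[c]))"
proof -
  define d where "d = 1/real m ^ Suc (length x)"
  define p where "p = pos m x"
  have d0: "0 < d" using m by (simp add: d_def)
  have md: "real m * d = 1/real m ^ length x" using m by (simp add: d_def)
  have pb: "0 \<le> p" "p + real m * d \<le> 1" using pos_bounds[OF x m] md by (auto simp: p_def)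
  have "integral {p..p + real m * d} f = (\<Sum>c<m. integral {p + real c * d .. p + real (Suc c) * d} f)"
    by (rule integral_split_n[OF f pb(1) _ pb(2)]) (use d0 in simp)
  moreover have "Fm m f (x@[c]) = integral {p + real c * d .. p + real (Suc c) * d} f / d" for c
  proof -
    have e1: "pos m (x@[c]) = p + real c * d" by (simp add: pos_snoc p_def d_def)
    have e2: "pos m (x@[c]) + 1/real m ^ length (x@[c]) = p + real (Suc c) * d"
      by (simp add: e1 d_def algebra_simps add_divide_distrib)
    have e3: "1/real m ^ length (x@[c]) = d" by (simp add: d_def)
    show ?thesis unfolding Fm_def e3 e1 by (simp add: algebra_simps)
  qed
  ultimately have "Fm m f x = (\<Sum>c<m. d * Fm m f (x@[c])) / (real m * d)"
    unfolding Fm_def md[symmetric] p_def[symmetric] using d0 by simp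
  also have "\<dots> = (1/real m) * (\<Sum>c<m. Fm m f (x@[c]))"
    using d0 m by (simp add: sum_distrib_left[symmetric] field_simps)
  finally show ?thesis .
qed

lemma psi_bounds:
  assumes m: "m \<ge> 2" and z: "z \<in> branches m" and pz: "passes z x"
  shows "pos m x \<le> psi m z \<and> psi m z \<le> pos m x + 1 / real m ^ length x"
proof -
  define g where "g n = real (z n) / real m ^ Suc n" for n
  define k where "k = length x"
  define C where "C = (real m - 1) / real m ^ Suc k"
  have zb: "real (z n) \<le> real m - 1" for n
  proof -
    have "Suc (z n) \<le> m" using z by (auto simp: branches_def Suc_le_eq)
    then have "real (Suc (z n)) \<le> real m" by (simp only: of_nat_le_iff)
    then show ?thesis by simp
  qed
  have gs: "(\<lambda>n. C * (1/real m)^n) sums (C * (1 / (1 - 1/real m)))"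
    using m by (intro sums_mult geometric_sums) auto
  have gle: "g (n + k) \<le> C * (1/real m)^n" for n
  proof -
    have "g (n+k) = real (z (n+k)) / real m ^ Suc k * (1/real m)^n"
      using m by (simp add: g_def power_add power_divide field_simps)
    also have "\<dots> \<le> C * (1/real m)^n"
      unfolding C_def using m zb[of "n+k"] by (intro mult_right_mono divide_right_mono) auto
    finally show ?thesis .
  qed
  have g0: "0 \<le> g n" for n by (simp add: g_def)
  have sg: "summable (\<lambda>n. g (n + k))"
    by (rule summable_comparison_test[OF _ sums_summable[OF gs]]) (use gle g0 in auto)
  then have sgall: "summable g" using summable_iff_shift by blast
  have "psi m z = (\<Sum>n. g (n + k)) + (\<Sum>i<k. g i)"
    unfolding psi_def g_def[symmetric] by (rule suminf_split_initial_segment[OF sgall])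
  moreover have "(\<Sum>i<k. g i) = pos m x"
    using pz unfolding passes_def pos_def g_def k_def by (metis (no_types, lifting) diff_zero length_map length_upt nth_map_upt add_0 sum.cong lessThan_iff)
  moreover have "0 \<le> (\<Sum>n. g (n + k))" using sg g0 by (intro suminf_nonneg) auto
  moreover have "(\<Sum>n. g (n + k)) \<le> C * (1 / (1 - 1/real m))"
    using sums_unique[OF gs] by (metis gle sg sums_summable[OF gs] suminf_le)
  moreover have "C * (1 / (1 - 1/real m)) = 1 / real m ^ k"
    using m by (simp add: C_def field_simps)
  ultimately show ?thesis by (simp add: k_def)
qed

lemma psi_01:
  assumes m: "m \<ge> 2" and z: "z \<in> branches m"
  shows "psi m z \<in> {0..1}"
  using psi_bounds[OF m z, of "[]"] by (simp add: passes_def)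

lemma Fm_bounded:
  assumes m: "m \<ge> 2" and f: "continuous_on {0..1} f" and M: "\<And>t. t \<in> {0..1} \<Longrightarrow> \<bar>f t\<bar> \<le> M"
    and x: "x \<in> tnodes m"
  shows "\<bar>Fm m f x\<bar> \<le> M"
proof -
  have m0: "m > 0" using m by simp
  have pb: "0 \<le> pos m x" "pos m x + 1/real m ^ length x \<le> 1" using pos_bounds[OF x m0] by auto
  have "\<bar>Fm m f x - 0\<bar> \<le> M"
    unfolding Fm_def
    by (rule avg_int_bound[OF f pb(1) _ pb(2)]) (use m0 pb M in auto)
  then show ?thesis by simp
qed

lemma Fm_boundary:
  assumes m: "m \<ge> 2" and f: "continuous_on {0..1} f"
  shows "boundary_val m (Fm m f) f"
  unfolding boundary_val_def
proof (intro allI impI)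
  fix \<epsilon> :: real assume e: "\<epsilon> > 0"
  have m0: "m > 0" using m by simp
  have "uniformly_continuous_on {0..1} f"
    using compact_uniformly_continuous[OF f] by simp
  then obtain \<delta> where d: "\<delta> > 0" and dd: "\<And>s t. s \<in> {0..1} \<Longrightarrow> t \<in> {0..1} \<Longrightarrow> dist s t < \<delta> \<Longrightarrow> dist (f s) (f t) < \<epsilon>/2"
    unfolding uniformly_continuous_on_def using e by (metis half_gt_zero)
  obtain K where K: "(1/real m) ^ K < \<delta>" using real_arch_pow_inv[OF d, of "1/real m"] m by auto
  show "\<exists>K. \<forall>x\<in>tnodes m. K \<le> length x \<longrightarrow> (\<forall>z\<in>branches m. passes z x \<longrightarrow> \<bar>Fm m f x - f (psi m z)\<bar> < \<epsilon>)"
  proof (intro exI ballI impI)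
    fix x z assume x: "x \<in> tnodes m" and kx: "K \<le> length x" and z: "z \<in> branches m" and pz: "passes z x"
    have pb: "0 \<le> pos m x" "pos m x + 1/real m ^ length x \<le> 1" using pos_bounds[OF x m0] by auto
    have ps: "pos m x \<le> psi m z" "psi m z \<le> pos m x + 1 / real m ^ length x" using psi_bounds[OF m z pz] by auto
    have small: "1/real m ^ length x < \<delta>"
    proof -
      have "(1/real m) ^ length x \<le> (1/real m) ^ K" using m kx by (intro power_decreasing) auto
      then show ?thesis using K by (simp add: power_one_over)
    qed
    have "\<bar>Fm m f x - f (psi m z)\<bar> \<le> \<epsilon>/2"
      unfolding Fm_def
    proof (rule avg_int_bound[OF f pb(1) _ pb(2)])
      show "0 < 1/real m ^ length x" using m0 by simp
      fix t assume t: "t \<in> {pos m x..pos m x + 1 / real m ^ length x}"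
      have "dist t (psi m z) < \<delta>" using t ps small by (auto simp: dist_real_def)
      moreover have "t \<in> {0..1}" using t pb by auto
      moreover have "psi m z \<in> {0..1}" using ps pb by auto
      ultimately have "dist (f t) (f (psi m z)) < \<epsilon>/2" using dd by blast
      then show "\<bar>f t - f (psi m z)\<bar> \<le> \<epsilon>/2" by (simp add: dist_real_def)
    qed
    then show "\<bar>Fm m f x - f (psi m z)\<bar> < \<epsilon>" using e by simp
  qed
qed

lemma bv_perturb:
  assumes u: "boundary_val m u f" and d: "\<And>x. x \<in> tnodes m \<Longrightarrow> \<bar>u' x - u x\<bar> \<le> e (length x)"
    and e: "e \<longlonglongrightarrow> 0"
  shows "boundary_val m u' f"
  unfolding boundary_val_def
proof (intro allI impI)
  fix \<epsilon> :: real assume ep: "\<epsilon> > 0"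
  obtain K1 where K1: "\<forall>x\<in>tnodes m. K1 \<le> length x \<longrightarrow> (\<forall>z\<in>branches m. passes z x \<longrightarrow> \<bar>u x - f (psi m z)\<bar> < \<epsilon>/2)"
    using u ep unfolding boundary_val_def by (meson half_gt_zero)
  obtain K2 where K2: "\<And>n. n \<ge> K2 \<Longrightarrow> e n < \<epsilon>/2"
    using order_tendstoD(2)[OF e, of "\<epsilon>/2"] ep by (auto simp: eventually_sequentially)
  show "\<exists>K. \<forall>x\<in>tnodes m. K \<le> length x \<longrightarrow> (\<forall>z\<in>branches m. passes z x \<longrightarrow> \<bar>u' x - f (psi m z)\<bar> < \<epsilon>)"
  proof (intro exI[of _ "max K1 K2"] ballI impI)
    fix x z assume x: "x \<in> tnodes m" "max K1 K2 \<le> length x" and z: "z \<in> branches m" "passes z x"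
    have "\<bar>u x - f (psi m z)\<bar> < \<epsilon>/2" using K1 x z by auto
    moreover have "\<bar>u' x - u x\<bar> < \<epsilon>/2" using d[OF x(1)] K2[of "length x"] x by auto
    ultimately show "\<bar>u' x - f (psi m z)\<bar> < \<epsilon>" by linarith
  qed
qed

lemma geo_sum: "(1-r) * (\<Sum>j=1..k. (r::real)^(k-j)) = 1 - r^k"
proof (induction k)
  case 0 then show ?case by simp
next
  case (Suc k)
  have "(\<Sum>j=1..Suc k. r^(Suc k-j)) = (\<Sum>j=1..k. r^(Suc k-j)) + 1" by simp
  also have "(\<Sum>j=1..k. r^(Suc k-j)) = r * (\<Sum>j=1..k. r^(k-j))"
    unfolding sum_distrib_left by (rule sum.cong) (auto simp: Suc_diff_le)
  finally have e: "(\<Sum>j=1..Suc k. r^(Suc k-j)) = r * (\<Sum>j=1..k. r^(k-j)) + 1" .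
  have "(1-r) * (r * (\<Sum>j=1..k. r^(k-j)) + 1) = r * ((1-r) * (\<Sum>j=1..k. r^(k-j))) + (1-r)"
    by (simp add: algebra_simps)
  then show ?case unfolding e Suc.IH by (simp add: algebra_simps)
qed

lemma passes_take: "passes z x \<Longrightarrow> j \<le> length x \<Longrightarrow> passes z (take j x)"
  unfolding passes_def by (metis length_take min.absorb1 take_map take_upt add_0 diff_zero length_map length_upt)

lemma bv_conv:
  assumes G: "boundary_val m G f" and GM: "\<And>x. x \<in> tnodes m \<Longrightarrow> \<bar>G x\<bar> \<le> M"
    and fM: "\<And>z. z \<in> branches m \<Longrightarrow> \<bar>f (psi m z)\<bar> \<le> M"
    and r: "0 \<le> r" "r < 1"
  shows "boundary_val m (\<lambda>x. (1-r) * (\<Sum>j=1..length x. r^(length x - j) * G (anc x j))) f"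
  unfolding boundary_val_def
proof (intro allI impI)
  fix \<epsilon> :: real assume ep: "\<epsilon> > 0"
  have M0: "0 \<le> M" using GM[of "[]"] by (auto simp: tnodes_def)
  obtain J where J: "\<forall>x\<in>tnodes m. J \<le> length x \<longrightarrow> (\<forall>z\<in>branches m. passes z x \<longrightarrow> \<bar>G x - f (psi m z)\<bar> < \<epsilon>/2)"
    using G ep unfolding boundary_val_def by (meson half_gt_zero)
  define D where "D = 2*M*real J + M + 1"
  have "0 \<le> 2*M*real J" using M0 by simp
  then have D0: "D > 0" using M0 unfolding D_def by linarith
  obtain N where N: "r^N < \<epsilon>/(2*D)"
    using order_tendstoD(2)[OF LIMSEQ_power_zero[of r], of "\<epsilon>/(2*D)"] ep D0 r
    by (auto simp: eventually_sequentially)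
  show "\<exists>K. \<forall>x\<in>tnodes m. K \<le> length x \<longrightarrow> (\<forall>z\<in>branches m. passes z x \<longrightarrow>
      \<bar>(1-r) * (\<Sum>j=1..length x. r^(length x - j) * G (anc x j)) - f (psi m z)\<bar> < \<epsilon>)"
  proof (intro exI[of _ "J + N"] ballI impI)
    fix x z assume x: "x \<in> tnodes m" "J + N \<le> length x" and z: "z \<in> branches m" "passes z x"
    define k where "k = length x"
    define fz where "fz = f (psi m z)"
    define d where "d j = G (anc x j) - fz" for j
    have fzM: "\<bar>fz\<bar> \<le> M" using fM[OF z(1)] by (simp add: fz_def)
    have E1: "(1-r) * (\<Sum>j=1..k. r^(k - j) * G (anc x j)) - fz = (1-r) * (\<Sum>j=1..k. r^(k-j) * d j) - r^k * fz"
    proof -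
      have e: "(\<Sum>j=1..k. r^(k-j) * d j) = (\<Sum>j=1..k. r^(k - j) * G (anc x j)) - fz * (\<Sum>j=1..k. r^(k-j))"
        (is "?SD = ?SG - fz * ?SR")
        by (simp add: d_def algebra_simps sum_subtractf sum_distrib_left)
      have "(1-r) * ?SD = (1-r) * ?SG - fz * ((1-r) * ?SR)" unfolding e by (simp add: algebra_simps)
      then show ?thesis unfolding geo_sum by (simp add: algebra_simps)
    qed
    have E3: "r^(k-j) * \<bar>d j\<bar> \<le> r^(k-j) * (\<epsilon>/2) + (if j < J then 2*M*r^N else 0)" if j: "j \<in> {1..k}" for j
    proof (cases "j < J")
      case True
      have "\<bar>d j\<bar> \<le> 2*M" using GM[OF tnodes_take[OF x(1)], of j] fzM by (simp add: d_def anc_def)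
      moreover have "r^(k-j) \<le> r^N" using True x(2) r by (intro power_decreasing) (auto simp: k_def)
      ultimately have "r^(k-j) * \<bar>d j\<bar> \<le> r^N * (2*M)" using r M0 by (intro mult_mono) auto
      moreover have "r^N * (2*M) = 2*M*r^N" by simp
      moreover have "0 \<le> r^(k-j) * (\<epsilon>/2)" using r ep by simp
      ultimately show ?thesis using True by simp
    next
      case False
      have jk: "j \<le> k" using j by simp
      have "\<bar>d j\<bar> < \<epsilon>/2"
        using J tnodes_take[OF x(1), of j] False jk z passes_take[OF z(2), of j]
        by (auto simp: d_def anc_def fz_def k_def)
      then have "r^(k-j) * \<bar>d j\<bar> \<le> r^(k-j) * (\<epsilon>/2)" using r by (intro mult_left_mono) auto
      then show ?thesis using False by simp
    qed
    have E4: "(\<Sum>j=1..k. (if j < J then 2*M*r^N else 0)) \<le> real J * (2*M*r^N)"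
    proof -
      have "(\<Sum>j=1..k. (if j < J then 2*M*r^N else 0)) = (\<Sum>j\<in>{1..k} \<inter> {..<J}. 2*M*r^N)"
        by (subst sum.inter_restrict) (auto simp: lessThan_def)
      also have "\<dots> \<le> (\<Sum>j\<in>{..<J}. 2*M*r^N)"
        using M0 r by (intro sum_mono2) auto
      finally show ?thesis by simp
    qed
    have "\<bar>(1-r) * (\<Sum>j=1..k. r^(k-j) * d j)\<bar> \<le> (1-r) * (\<Sum>j=1..k. r^(k-j) * \<bar>d j\<bar>)"
      using r by (simp add: abs_mult) (intro mult_left_mono order_trans[OF sum_abs] sum_mono, auto simp: abs_mult)
    also have "\<dots> \<le> (1-r) * ((\<epsilon>/2) * (\<Sum>j=1..k. r^(k-j)) + real J * (2*M*r^N))"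
    proof -
      have "(\<Sum>j=1..k. r^(k-j) * \<bar>d j\<bar>) \<le> (\<Sum>j=1..k. r^(k-j) * (\<epsilon>/2) + (if j < J then 2*M*r^N else 0))"
        using E3 by (intro sum_mono) auto
      also have "\<dots> = (\<epsilon>/2) * (\<Sum>j=1..k. r^(k-j)) + (\<Sum>j=1..k. (if j < J then 2*M*r^N else 0))"
        by (simp add: sum.distrib sum_distrib_left mult_ac)
      finally show ?thesis using E4 r by (intro mult_left_mono) auto
    qed
    also have "\<dots> = (\<epsilon>/2) * ((1-r) * (\<Sum>j=1..k. r^(k-j))) + (1-r) * (real J * (2*M*r^N))"
      by (metis distrib_left mult.left_commute)
    also have "\<dots> = (\<epsilon>/2) * (1 - r^k) + (1-r) * (real J * (2*M*r^N))"
      unfolding geo_sum ..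
    also have "\<dots> \<le> \<epsilon>/2 + real J * (2*M*r^N)"
    proof -
      have "(\<epsilon>/2) * (1 - r^k) \<le> \<epsilon>/2" using ep r by (simp add: mult_le_cancel_left1)
      moreover have "(1-r) * (real J * (2*M*r^N)) \<le> real J * (2*M*r^N)"
        using r M0 by (simp add: mult_left_le_one_le mult_nonneg_nonneg)
      ultimately show ?thesis by linarith
    qed
    finally have A: "\<bar>(1-r) * (\<Sum>j=1..k. r^(k-j) * d j)\<bar> \<le> \<epsilon>/2 + real J * (2*M*r^N)" .
    have B: "\<bar>r^k * fz\<bar> \<le> r^N * M"
    proof -
      have "r^k \<le> r^N" using x(2) r by (intro power_decreasing) (auto simp: k_def)
      then show ?thesis using fzM r by (simp add: abs_mult) (intro mult_mono, auto)
    qed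
    have C: "r^N * D < \<epsilon>/2" using N D0 by (simp add: field_simps)
    have "\<bar>(1-r) * (\<Sum>j=1..k. r^(k - j) * G (anc x j)) - fz\<bar> < \<epsilon>"
    proof -
      have "r^N * D = real J*(2*M*r^N) + r^N*M + r^N" by (simp add: D_def algebra_simps)
      moreover have "0 \<le> r^N" using r by simp
      moreover have "\<bar>(1-r) * (\<Sum>j=1..k. r^(k-j) * d j) - r^k * fz\<bar> \<le>
          \<bar>(1-r) * (\<Sum>j=1..k. r^(k-j) * d j)\<bar> + \<bar>r^k * fz\<bar>" by (rule abs_triangle_ineq4)
      ultimately show ?thesis unfolding E1 using A B C by linarith
    qed
    then show "\<bar>(1-r) * (\<Sum>j=1..length x. r^(length x - j) * G (anc x j)) - f (psi m z)\<bar> < \<epsilon>"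
      by (simp add: k_def fz_def)
  qed
qed

lemma bound_f:
  assumes f: "continuous_on {0..1::real} f"
  shows "\<exists>M. \<forall>t\<in>{0..1}. \<bar>f t\<bar> \<le> (M::real)"
proof -
  have "compact (f ` {0..1})" by (rule compact_continuous_image[OF f]) simp
  then have "bounded (f ` {0..1})" by (rule compact_imp_bounded)
  then show ?thesis unfolding bounded_iff by auto
qed

lemma dirichlet:
  assumes m: "m \<ge> 2" and b: "0 \<le> \<beta>" "\<beta> < 1/2" and f: "continuous_on {0..1} f"
    and conv: "\<forall>x\<in>tnodes m. S_conv m \<beta> h x"
    and lim: "(\<lambda>k. Sup {\<bar>\<Sum>j=1..k. (\<beta> / (1 - \<beta>)) ^ (k - j) * S_op m \<beta> h (anc x j)\<bar> | x.
                    x \<in> tnodes m \<and> length x = k}) \<longlonglongrightarrow> 0"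
  shows "\<exists>U. (\<forall>x\<in>tnodes m. avg_op m \<beta> U x = h x) \<and> boundary_val m U f"
proof -
  have m0: "m > 0" using m by simp
  define r where "r = \<beta>/(1-\<beta>)"
  have r: "0 \<le> r" "r < 1" using b by (auto simp: r_def field_simps)
  have br: "(1-\<beta>)*(1-r) = 1 - 2*\<beta>" using b by (simp add: r_def field_simps)
  define S where "S y = S_op m \<beta> h y + Fm m f y" for y
  have Seq: "S x - (1/real m) * (\<Sum>c<m. S (x@[c])) = h x / (1 - 2*\<beta>)" if x: "x \<in> tnodes m" for x
  proof -
    have "S_op m \<beta> h x = h x / (1 - 2*\<beta>) + (1/real m) * (\<Sum>c<m. S_op m \<beta> h (x@[c]))"
      using S_op_eq[OF m0 b] conv x tnodes_snoc by blast
    moreover have "Fm m f x = (1/real m) * (\<Sum>c<m. Fm m f (x@[c]))" by (rule Fm_harm[OF x m0 f])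
    ultimately show ?thesis by (simp add: S_def sum.distrib algebra_simps)
  qed
  define a where "a = (1/real m) * (\<Sum>c<m. S [c]) + h [] / (1-r)"
  define U where "U = Wf r a S"
  have avg: "avg_op m \<beta> U x = h x" if x: "x \<in> tnodes m" for x
  proof (cases "x = []")
    case True
    have "avg_op m \<beta> U [] = a*(1-r) - (1-r) * ((1/real m) * (\<Sum>c<m. S [c]))"
      unfolding U_def by (rule avg_Wf_root[OF m0])
    also have "\<dots> = h []" using r by (simp add: a_def field_simps)
    finally show ?thesis using True by simp
  next
    case False
    have "avg_op m \<beta> U x = (1-\<beta>)*(1-r)*(S x - (1/real m) * (\<Sum>c<m. S (x@[c])))"
      unfolding U_def by (rule avg_Wf_nonroot[OF False m0 _ r_def]) (use b in simp)
    also have "\<dots> = h x" unfolding Seq[OF x] br using b by simp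
    finally show ?thesis .
  qed
  obtain M where M: "\<forall>t\<in>{0..1}. \<bar>f t\<bar> \<le> M" using bound_f[OF f] by blast
  define G where "G x = (1-r) * (\<Sum>j=1..length x. r^(length x - j) * Fm m f (anc x j))" for x
  have Gb: "boundary_val m G f"
    unfolding G_def
    by (rule bv_conv[OF Fm_boundary[OF m f] Fm_bounded[OF m f] _ r])
       (use M psi_01[OF m] in auto)
  define Sk where "Sk k = Sup {\<bar>\<Sum>j=1..k. (\<beta> / (1 - \<beta>)) ^ (k - j) * S_op m \<beta> h (anc x j)\<bar> | x.
                    x \<in> tnodes m \<and> length x = k}" for k
  have Sk: "\<bar>\<Sum>j=1..length x. r ^ (length x - j) * S_op m \<beta> h (anc x j)\<bar> \<le> Sk (length x)"
    if x: "x \<in> tnodes m" for x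
  proof -
    have fin: "finite {\<bar>\<Sum>j=1..k. (\<beta> / (1 - \<beta>)) ^ (k - j) * S_op m \<beta> h (anc x j)\<bar> | x.
                    x \<in> tnodes m \<and> length x = k}" for k
    proof -
      have "{\<bar>\<Sum>j=1..k. (\<beta> / (1 - \<beta>)) ^ (k - j) * S_op m \<beta> h (anc x j)\<bar> | x.
                    x \<in> tnodes m \<and> length x = k} =
         (\<lambda>x. \<bar>\<Sum>j=1..k. (\<beta> / (1 - \<beta>)) ^ (k - j) * S_op m \<beta> h (anc x j)\<bar>) ` {x\<in>tnodes m. length x = k}"
        by auto
      then show ?thesis using finite_level by simp
    qed
    show ?thesis unfolding Sk_def r_def
      by (rule cSup_upper[OF _ bdd_above_finite[OF fin]]) (use x in auto)
  qed
  define e where "e k = \<bar>a\<bar> * r^k + (1-r) * Sk k" for k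
  have e: "e \<longlonglongrightarrow> 0"
  proof -
    have "(\<lambda>k. \<bar>a\<bar> * r^k + (1-r) * Sk k) \<longlonglongrightarrow> \<bar>a\<bar> * 0 + (1-r) * 0"
      using r lim unfolding Sk_def[symmetric]
      by (intro tendsto_intros) auto
    moreover have "e = (\<lambda>k. \<bar>a\<bar> * r^k + (1-r) * Sk k)" by (rule ext) (simp add: e_def)
    ultimately show ?thesis by simp
  qed
  have d: "\<bar>U x - G x\<bar> \<le> e (length x)" if x: "x \<in> tnodes m" for x
  proof -
    have "U x - G x = a * r ^ length x + (1-r) * (\<Sum>j=1..length x. r ^ (length x - j) * S_op m \<beta> h (anc x j))"
      unfolding U_def Wf_def G_def S_def by (simp add: algebra_simps sum.distrib)
    also have "\<bar>\<dots>\<bar> \<le> \<bar>a\<bar> * r ^ length x + (1-r) * Sk (length x)"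
    proof -
      have "\<bar>(1-r) * (\<Sum>j=1..length x. r ^ (length x - j) * S_op m \<beta> h (anc x j))\<bar> \<le> (1-r) * Sk (length x)"
        using Sk[OF x] r by (simp add: abs_mult)
      moreover have "\<bar>a * r ^ length x\<bar> = \<bar>a\<bar> * r ^ length x" using r by (simp add: abs_mult)
      ultimately show ?thesis by (smt (verit) abs_triangle_ineq)
    qed
    finally show ?thesis by (simp add: e_def)
  qed
  have "boundary_val m U f" by (rule bv_perturb[OF Gb d e])
  with avg show ?thesis by blast
qed

lemma avg_op_lin: "avg_op m \<beta> (\<lambda>y. u y + t * w y) x = avg_op m \<beta> u x + t * avg_op m \<beta> w x"
  unfolding avg_op_def by (simp add: sum.distrib sum_distrib_left algebra_simps)

lemma avg_op_mono_nb:
  assumes x: "x \<in> tnodes m" and uw: "\<And>y. y \<in> tnodes m \<Longrightarrow> u y \<le> w y" and b: "0 \<le> \<beta>" "\<beta> \<le> 1" and m: "m > 0"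
  shows "u x - avg_op m \<beta> u x \<le> w x - avg_op m \<beta> w x"
proof -
  have s: "(\<Sum>y\<in>succs m 1 x. u y) \<le> (\<Sum>y\<in>succs m 1 x. w y)"
    by (rule sum_mono) (use uw tnodes_succs1[OF x] in auto)
  have s2: "(1 / real m) * (\<Sum>y\<in>succs m 1 x. u y) \<le> (1 / real m) * (\<Sum>y\<in>succs m 1 x. w y)"
    using s m by (intro mult_left_mono) auto
  have p: "u (pred_node x) \<le> w (pred_node x)" using uw tnodes_butlast[OF x] by (simp add: pred_node_def)
  have A: "\<beta> * u (pred_node x) \<le> \<beta> * w (pred_node x)" using p b by (intro mult_left_mono) auto
  have B: "(1 - \<beta>) * ((1 / real m) * (\<Sum>y\<in>succs m 1 x. u y)) \<le> (1 - \<beta>) * ((1 / real m) * (\<Sum>y\<in>succs m 1 x. w y))"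
    by (rule mult_left_mono[OF s2]) (use b in simp)
  have eq: "v x - avg_op m \<beta> v x = (if x = [] then (1 / real m) * (\<Sum>y\<in>succs m 1 x. v y)
     else \<beta> * v (pred_node x) + (1 - \<beta>) * ((1 / real m) * (\<Sum>y\<in>succs m 1 x. v y)))" for v
    unfolding avg_op_def by auto
  show ?thesis
  proof (cases "x = []")
    case True
    show ?thesis unfolding eq if_P[OF True] by (rule s2)
  next
    case False
    show ?thesis unfolding eq if_not_P[OF False] by (rule add_mono[OF A B])
  qed
qed

lemma avg_op_upd: "avg_op m \<beta> (u(x:=c)) x = avg_op m \<beta> u x + (c - u x)"
proof -
  have s: "(\<Sum>y\<in>succs m 1 x. (u(x:=c)) y) = (\<Sum>y\<in>succs m 1 x. u y)"
    by (rule sum.cong) (auto simp: succs_def)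
  have p: "x \<noteq> [] \<Longrightarrow> pred_node x \<noteq> x" unfolding pred_node_def
    by (metis append_butlast_last_id append_self_conv self_append_conv2 list.distinct(1) butlast_snoc length_butlast diff_less length_greater_0_conv zero_less_one less_irrefl)
  show ?thesis
  proof (cases "x = []")
    case True
    show ?thesis using s unfolding avg_op_def True by simp
  next
    case False
    show ?thesis unfolding avg_op_def s using p False by auto
  qed
qed

lemma avg_op_pow:
  assumes m: "m > 0" and b: "0 \<le> \<beta>" "\<beta> < 1" and r: "r = \<beta>/(1-\<beta>)" and rho: "r \<le> \<rho>" "\<rho> \<le> 1"
  shows "0 \<le> avg_op m \<beta> (\<lambda>y. \<rho> ^ length y) x"
proof (cases x rule: rev_cases)
  case Nil
  have "avg_op m \<beta> (\<lambda>y. \<rho> ^ length y) x = 1 - \<rho>"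
    unfolding Nil avg_op_root using m by simp
  then show ?thesis using rho by simp
next
  case (snoc x' c)
  define k where "k = length x'"
  have br: "(1-\<beta>) * r = \<beta>" using b r by simp
  have "avg_op m \<beta> (\<lambda>y. \<rho> ^ length y) x = \<rho>^k * (\<rho> - \<beta> - (1-\<beta>)*\<rho>^2)"
  proof -
    have xn: "x \<noteq> []" using snoc by simp
    show ?thesis unfolding avg_op_nonroot[OF xn] using m
      by (simp add: snoc k_def power2_eq_square field_simps)
  qed
  also have "\<rho> - \<beta> - (1-\<beta>)*\<rho>^2 = (1-\<beta>)*(\<rho>-r)*(1-\<rho>)"
  proof -
    have "(1-\<beta>)*(\<rho>-r)*(1-\<rho>) = (1-\<beta>)*\<rho>*(1-\<rho>) - ((1-\<beta>)*r)*(1-\<rho>)" by (simp add: algebra_simps)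
    then show ?thesis unfolding br by (simp add: power2_eq_square algebra_simps)
  qed
  finally have e: "avg_op m \<beta> (\<lambda>y. \<rho> ^ length y) x = \<rho> ^ k * ((1 - \<beta>) * (\<rho> - r) * (1 - \<rho>))" .
  have r0: "0 \<le> r" using b r by simp
  have "0 \<le> (1 - \<beta>) * (\<rho> - r) * (1 - \<rho>)" using b rho by simp
  moreover have "0 \<le> \<rho> ^ k" using r0 rho by simp
  ultimately show ?thesis unfolding e by simp
qed

lemma branch_through:
  assumes x: "x \<in> tnodes m" and m: "m > 0"
  shows "\<exists>z\<in>branches m. passes z x"
proof -
  define z where "z i = (if i < length x then x!i else 0)" for i
  have "z \<in> branches m" using x m by (auto simp: z_def branches_def tnodes_def) (meson lessThan_iff nth_mem subsetD)
  moreover have "passes z x" unfolding passes_def by (rule nth_equalityI) (auto simp: z_def)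
  ultimately show ?thesis by blast
qed

theorem theorem1p1:
  fixes m :: nat and \<beta>1 \<beta>2 :: real and h1 h2 :: "nat list \<Rightarrow> real" and f g :: "real \<Rightarrow> real"
  assumes "m \<ge> 2"
    and "0 \<le> \<beta>1" "\<beta>1 < 1/2" "0 \<le> \<beta>2" "\<beta>2 < 1/2"
    and "continuous_on {0..1} f" "continuous_on {0..1} g"
    and "\<forall>s\<in>{0..1}. f s > g s"
    and "\<forall>x\<in>tnodes m. S_conv m \<beta>1 h1 x"
    and "\<forall>x\<in>tnodes m. S_conv m \<beta>2 h2 x"
    and "(\<lambda>k. Sup {\<bar>\<Sum>j=1..k. (\<beta>1 / (1 - \<beta>1)) ^ (k - j) * S_op m \<beta>1 h1 (anc x j)\<bar> | x.
                    x \<in> tnodes m \<and> length x = k}) \<longlonglongrightarrow> 0"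
    and "(\<lambda>k. Sup {\<bar>\<Sum>j=1..k. (\<beta>2 / (1 - \<beta>2)) ^ (k - j) * S_op m \<beta>2 h2 (anc x j)\<bar> | x.
                    x \<in> tnodes m \<and> length x = k}) \<longlonglongrightarrow> 0"
  shows "\<exists>u v :: nat list \<Rightarrow> real.
           (\<forall>x\<in>tnodes m.
              max (- avg_op m \<beta>1 u x + h1 x) (v x - u x) = 0 \<and>
              min (- avg_op m \<beta>2 v x + h2 x) (u x - v x) = 0) \<and>
           boundary_val m u f \<and> boundary_val m v g \<and>
           finite {x\<in>tnodes m. u x = v x}"
proof -
  note A = assms
  have m: "m \<ge> 2" using A by simp
  have m0: "m > 0" using m by simp
  obtain U where U1: "\<And>x. x \<in> tnodes m \<Longrightarrow> avg_op m \<beta>1 U x = h1 x" and U2: "boundary_val m U f"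
    using dirichlet[OF m A(2,3,6,9,11)] by blast
  obtain V where V1: "\<And>x. x \<in> tnodes m \<Longrightarrow> avg_op m \<beta>2 V x = h2 x" and V2: "boundary_val m V g"
    using dirichlet[OF m A(4,5,7,10,12)] by blast
  have cfg: "continuous_on {0..1} (\<lambda>s. f s - g s)" using A(6,7) by (intro continuous_intros)
  obtain s0 where s0: "s0 \<in> {0..1}" "\<And>s. s \<in> {0..1} \<Longrightarrow> f s0 - g s0 \<le> f s - g s"
    using continuous_attains_inf[OF compact_Icc _ cfg] by auto
  define \<delta> where "\<delta> = f s0 - g s0"
  have d0: "\<delta> > 0" using A(8) s0 by (auto simp: \<delta>_def)
  obtain K1 where K1: "\<forall>x\<in>tnodes m. K1 \<le> length x \<longrightarrow> (\<forall>z\<in>branches m. passes z x \<longrightarrow> \<bar>U x - f (psi m z)\<bar> < \<delta>/2)"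
    using U2 d0 unfolding boundary_val_def by (meson half_gt_zero)
  obtain K2 where K2: "\<forall>x\<in>tnodes m. K2 \<le> length x \<longrightarrow> (\<forall>z\<in>branches m. passes z x \<longrightarrow> \<bar>V x - g (psi m z)\<bar> < \<delta>/2)"
    using V2 d0 unfolding boundary_val_def by (meson half_gt_zero)
  define K where "K = max K1 K2"
  have sep: "V x < U x" if x: "x \<in> tnodes m" "K \<le> length x" for x
  proof -
    obtain z where z: "z \<in> branches m" "passes z x" using branch_through[OF x(1) m0] by blast
    have "\<bar>U x - f (psi m z)\<bar> < \<delta>/2" "\<bar>V x - g (psi m z)\<bar> < \<delta>/2" using K1 K2 x z by (auto simp: K_def)
    moreover have "\<delta> \<le> f (psi m z) - g (psi m z)" using s0 psi_01[OF m z(1)] by (auto simp: \<delta>_def)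
    ultimately show ?thesis unfolding abs_less_iff by linarith
  qed
  define r where "r = \<beta>1/(1-\<beta>1)"
  have r: "0 \<le> r" "r < 1" using A(2,3) by (auto simp: r_def field_simps)
  define \<rho> where "\<rho> = (1 + r)/2"
  have rho: "r \<le> \<rho>" "\<rho> \<le> 1" "0 < \<rho>" "\<rho> < 1" using r by (auto simp: \<rho>_def)
  define Fin where "Fin = {x\<in>tnodes m. length x < K}"
  have finF: "finite Fin" unfolding Fin_def by (rule finite_below)
  define t where "t = Max (insert 0 ((\<lambda>x. (V x - U x)/\<rho>^length x) ` Fin))"
  have t0: "0 \<le> t" unfolding t_def using finF by simp
  have tF: "(V x - U x)/\<rho>^length x \<le> t" if "x \<in> Fin" for x
    unfolding t_def using finF that by (intro Max_ge) auto
  define B where "B y = U y + t * \<rho>^length y" for y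
  have BU: "U x \<le> B x" for x using t0 rho by (simp add: B_def)
  have BV: "V x \<le> B x" if x: "x \<in> tnodes m" for x
  proof (cases "length x < K")
    case True
    then have "(V x - U x)/\<rho>^length x \<le> t" using tF x by (auto simp: Fin_def)
    then have "V x - U x \<le> t * \<rho>^length x" using rho by (simp add: divide_le_eq)
    then show ?thesis by (simp add: B_def)
  next
    case False
    then show ?thesis using sep[OF x] BU[of x] by simp
  qed
  have Bs: "h1 x \<le> avg_op m \<beta>1 B x" if x: "x \<in> tnodes m" for x
  proof -
    have "avg_op m \<beta>1 B x = h1 x + t * avg_op m \<beta>1 (\<lambda>y. \<rho>^length y) x"
      unfolding B_def avg_op_lin U1[OF x] ..
    moreover have "0 \<le> avg_op m \<beta>1 (\<lambda>y. \<rho>^length y) x"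
      by (rule avg_op_pow[OF m0 A(2) _ r_def rho(1,2)]) (use A(3) in simp)
    ultimately show ?thesis using t0 by simp
  qed
  define \<Phi> where "\<Phi> = {w. \<forall>x\<in>tnodes m. V x \<le> w x \<and> U x \<le> w x \<and> w x \<le> B x \<and> h1 x \<le> avg_op m \<beta>1 w x}"
  have BP: "B \<in> \<Phi>" using BU BV Bs by (auto simp: \<Phi>_def)
  define u where "u x = Inf ((\<lambda>w. w x) ` \<Phi>)" for x
  have lower: "u x \<le> w x" if "x \<in> tnodes m" "w \<in> \<Phi>" for x w
    unfolding u_def by (rule cInf_lower) (use that in \<open>auto simp: \<Phi>_def bdd_below_def\<close>)
  have greatest: "c \<le> u x" if "\<And>w. w \<in> \<Phi> \<Longrightarrow> c \<le> w x" for x c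
    unfolding u_def by (rule cInf_greatest) (use that BP in auto)
  have uU: "U x \<le> u x" and uV: "V x \<le> u x" if "x \<in> tnodes m" for x
    using greatest[of "U x" x] greatest[of "V x" x] that by (auto simp: \<Phi>_def)
  have uB: "u x \<le> B x" if "x \<in> tnodes m" for x using lower[OF that BP] .
  have b1: "0 \<le> \<beta>1" "\<beta>1 \<le> 1" using A(2,3) by auto
  have us: "h1 x \<le> avg_op m \<beta>1 u x" if x: "x \<in> tnodes m" for x
  proof -
    have "h1 x + (u x - avg_op m \<beta>1 u x) \<le> u x"
    proof (rule greatest)
      fix w assume w: "w \<in> \<Phi>"
      have "u x - avg_op m \<beta>1 u x \<le> w x - avg_op m \<beta>1 w x"
        by (rule avg_op_mono_nb[OF x _ b1 m0]) (use lower w in auto)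
      moreover have "h1 x \<le> avg_op m \<beta>1 w x" using w x by (auto simp: \<Phi>_def)
      ultimately show "h1 x + (u x - avg_op m \<beta>1 u x) \<le> w x" by linarith
    qed
    then show ?thesis by linarith
  qed
  have uP: "u \<in> \<Phi>" using uU uV uB us by (auto simp: \<Phi>_def)
  have comp: "max (- avg_op m \<beta>1 u x + h1 x) (V x - u x) = 0" if x: "x \<in> tnodes m" for x
  proof (rule ccontr)
    assume "max (- avg_op m \<beta>1 u x + h1 x) (V x - u x) \<noteq> 0"
    then have c1: "h1 x < avg_op m \<beta>1 u x" and c2: "V x < u x" using us[OF x] uV[OF x] by auto
    show False
    proof (cases "u x = U x")
      case True
      have "u x - avg_op m \<beta>1 u x \<ge> U x - avg_op m \<beta>1 U x"
        by (rule avg_op_mono_nb[OF x _ b1 m0]) (use uU in auto)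
      then show False using True U1[OF x] c1 by simp
    next
      case False
      then have c3: "U x < u x" using uU[OF x] by simp
      define \<epsilon> where "\<epsilon> = min (avg_op m \<beta>1 u x - h1 x) (min (u x - V x) (u x - U x))"
      have e0: "\<epsilon> > 0" using c1 c2 c3 by (simp add: \<epsilon>_def)
      define u' where "u' = u(x := u x - \<epsilon>)"
      have u'le: "u' y \<le> u y" for y using e0 by (simp add: u'_def)
      have "u' \<in> \<Phi>"
        unfolding \<Phi>_def
      proof (intro CollectI ballI conjI)
        fix y assume y: "y \<in> tnodes m"
        show "V y \<le> u' y" "U y \<le> u' y" using uV[OF y] uU[OF y] by (auto simp: u'_def \<epsilon>_def)
        show "u' y \<le> B y" using uB[OF y] u'le[of y] by linarith
        show "h1 y \<le> avg_op m \<beta>1 u' y"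
        proof (cases "y = x")
          case True
          have "avg_op m \<beta>1 u' x = avg_op m \<beta>1 u x - \<epsilon>" unfolding u'_def avg_op_upd by simp
          then show ?thesis using True by (simp add: \<epsilon>_def)
        next
          case False
          have "u' y - avg_op m \<beta>1 u' y \<le> u y - avg_op m \<beta>1 u y"
            by (rule avg_op_mono_nb[OF y _ b1 m0]) (use u'le in auto)
          moreover have "u' y = u y" using False by (simp add: u'_def)
          ultimately show ?thesis using us[OF y] by linarith
        qed
      qed
      then have "u x \<le> u' x" using lower[OF x] by blast
      then show False using e0 by (simp add: u'_def)
    qed
  qed
  have comp2: "min (- avg_op m \<beta>2 V x + h2 x) (u x - V x) = 0" if x: "x \<in> tnodes m" for x
    using V1[OF x] uV[OF x] by simp
  have bu: "boundary_val m u f"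
  proof (rule bv_perturb[OF U2])
    show "\<bar>u x - U x\<bar> \<le> t * \<rho> ^ length x" if "x \<in> tnodes m" for x
      using uU[OF that] uB[OF that] by (simp add: B_def)
    have "(\<lambda>k. t * \<rho> ^ k) \<longlonglongrightarrow> t * 0" using rho by (intro tendsto_intros) auto
    then show "(\<lambda>k. t * \<rho> ^ k) \<longlonglongrightarrow> 0" by simp
  qed
  have "{x\<in>tnodes m. u x = V x} \<subseteq> Fin"
  proof
    fix x assume x: "x \<in> {x\<in>tnodes m. u x = V x}"
    then have "\<not> K \<le> length x" using sep uU by force
    then show "x \<in> Fin" using x by (auto simp: Fin_def)
  qed
  then have "finite {x\<in>tnodes m. u x = V x}" using finF by (rule finite_subset)
  then show ?thesis using comp comp2 bu V2 by blast
qed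

end
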